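(* Let $\mathbb{F}$ be a field of characteristic $p>0$. Let $P(t,y),Q(t,y)\in\mathbb{F}[[t,y]]$ and $\varphi(t)\in\mathbb{F}[[t]]$ satisfy $P(t,y)=(y-\varphi(t))^{p^{\ell}e}\cdot Q(t,y)$ with $\ell\ge0$, $e\ge1$, $\gcd(p,e)=1$, $\varphi(0)=0$ and $Q(0,0)=\alpha\neq0$. Then $$\varphi(t)^{p^{\ell}}=\sum_{m\ge0}[y^{p^{\ell}(e(m+1)-2)}]\left(\frac{\mathcal{H}^{(p^{\ell})}_y(P)(t,y)}{e\cdot\alpha^{m+1}}\big(\alpha y^{p^{\ell}e}-P(t,y)\big)^m\right).$$ Moreover, for every $d\ge0$, $$\mathrm{Hom}_{\le d}\big[\varphi(t)^{p^{\ell}}\big]=\mathrm{Hom}_{\le d}\left[\sum_{m=0}^{2e(d+p^{\ell})}[y^{p^{\ell}(e(m+1)-2)}]\left(\frac{\mathcal{H}^{(p^{\ell})}_y(P)(t,y)}{e\cdot\alpha^{m+1}}\big(\alpha y^{p^{\ell}e}-P(t,y)\big)^m\right)\right].$$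
   Context: $\mathcal{H}^{(i)}_y(F)$, the Hasse derivative of order $i$ with respect to $y$, is the coefficient of $z^i$ in $F(t,y+z)$. For $G\in\mathbb{F}[[t,y]]$, $[y^a](G)\in\mathbb{F}[[t]]$ is the coefficient of $y^a$ when $G$ is viewed as a power series in $y$ over $\mathbb{F}[[t]]$. $\mathrm{Hom}_{\le d}$ of a power series in $t$ is its truncation to terms of degree at most $d$. *)

theory Defs
  imports "HOL-Computational_Algebra.Formal_Power_Series"
begin

text \<open>Bivariate power series F[[t,y]] are represented as F[[t]][[y]], i.e. the type
  'a fps fps: the outer variable is y, coefficients are power series in t.
  Hence [y^a](G) is simply G $ a.\<close>

text \<open>Hasse derivative of order i w.r.t. y: the coefficient of z^i in F(t,y+z).
  Since (y+z)^n = sum_i (n choose i) y^(n-i) z^i, its y^k coefficient is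
  ((k+i) choose i) * F_(k+i).\<close>
definition hasse_y :: "nat \<Rightarrow> 'a::comm_ring_1 fps fps \<Rightarrow> 'a fps fps" where
  "hasse_y i F = Abs_fps (\<lambda>k. of_nat ((k + i) choose i) * fps_nth F (k + i))"

definition hom_le :: "nat \<Rightarrow> 'a::zero fps \<Rightarrow> 'a fps" where
  "hom_le d f = Abs_fps (\<lambda>k. if k \<le> d then fps_nth f k else 0)"

text \<open>(A negative exponent, i.e. e(m+1) < 2, gives coefficient 0.) The m-th summand [y^(p^l (e(m+1)-2))]( H^(p^l)_y(P) / (e alpha^(m+1)) * (alpha y^(p^l e) - P)^m ).\<close>
definition A4_term :: "nat \<Rightarrow> nat \<Rightarrow> nat \<Rightarrow> 'a::field \<Rightarrow> 'a fps fps \<Rightarrow> nat \<Rightarrow> 'a fps" where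
  "A4_term p l e \<alpha> P m =
    (if e * (m + 1) < 2 then 0 else
     fps_nth (fps_const (fps_const (inverse (of_nat e * \<alpha> ^ (m + 1)))) * hasse_y (p ^ l) P
        * (fps_const (fps_const \<alpha>) * fps_X ^ (p ^ l * e) - P) ^ m) (p ^ l * (e * (m + 1) - 2)))"

end

theory Submission
  imports Defs "HOL-Computational_Algebra.Primes"
begin
unbundle fps_syntax


lemma frob1:
  fixes x y :: "'b::comm_ring_1"
  assumes "prime (CHAR('b))"
  shows "(x + y) ^ CHAR('b) = x ^ CHAR('b) + y ^ CHAR('b)"
proof -
  define p where "p = CHAR('b)"
  have p: "prime p" using assms by (simp add: p_def)
  have "(x+y)^p = (\<Sum>k\<le>p. of_nat (p choose k) * x^k * y^(p-k))" by (rule binomial_ring)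
  also have "\<dots> = (\<Sum>k\<in>{0,p}. of_nat (p choose k) * x^k * y^(p-k))"
  proof (rule sum.mono_neutral_right)
    show "\<forall>i\<in>{..p} - {0, p}. of_nat (p choose i) * x ^ i * y ^ (p - i) = 0"
    proof
      fix i assume i: "i \<in> {..p} - {0, p}"
      have "p dvd (p choose i)" using i p by (intro dvd_choose_prime) auto
      hence "(of_nat (p choose i) :: 'b) = 0" by (simp add: of_nat_eq_0_iff_char_dvd p_def)
      thus "of_nat (p choose i) * x ^ i * y ^ (p - i) = 0" by simp
    qed
  qed auto
  also have "\<dots> = x^p + y^p" using p by (cases "p = 0") (auto simp: prime_gt_0_nat)
  finally show ?thesis by (simp add: p_def)
qed

lemma frob_add:
  fixes x y :: "'b::comm_ring_1"
  assumes "prime (CHAR('b))"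
  shows "(x + y) ^ (CHAR('b) ^ l) = x ^ (CHAR('b) ^ l) + y ^ (CHAR('b) ^ l)"
proof (induction l)
  case (Suc l)
  have "(x + y) ^ (CHAR('b) ^ Suc l) = ((x + y) ^ (CHAR('b) ^ l)) ^ CHAR('b)"
    by (simp add: power_mult[symmetric] mult.commute)
  also have "\<dots> = (x ^ (CHAR('b) ^ l)) ^ CHAR('b) + (y ^ (CHAR('b) ^ l)) ^ CHAR('b)"
    using Suc frob1[OF assms] by simp
  finally show ?case by (simp add: power_mult[symmetric] mult.commute)
qed simp

lemma frob:
  fixes x y :: "'b::comm_ring_1"
  assumes "prime (CHAR('b))"
  shows "(x - y) ^ (CHAR('b) ^ l) = x ^ (CHAR('b) ^ l) - y ^ (CHAR('b) ^ l)"
proof -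
  have A: "(x + y) ^ (CHAR('b) ^ l) = x ^ (CHAR('b) ^ l) + y ^ (CHAR('b) ^ l)" for x y :: 'b
  proof (induction l)
    case (Suc l)
    have "(x + y) ^ (CHAR('b) ^ Suc l) = ((x + y) ^ (CHAR('b) ^ l)) ^ CHAR('b)"
      by (simp add: power_mult[symmetric] mult.commute)
    also have "\<dots> = (x ^ (CHAR('b) ^ l)) ^ CHAR('b) + (y ^ (CHAR('b) ^ l)) ^ CHAR('b)"
      using Suc frob1[OF assms] by simp
    finally show ?case by (simp add: power_mult[symmetric] mult.commute)
  qed simp
  have B: "(- y) ^ (CHAR('b) ^ l) = - (y ^ (CHAR('b) ^ l))" for y :: 'b
  proof (induction l)
    case (Suc l)
    have "(- y) ^ (CHAR('b) ^ Suc l) = ((- y) ^ (CHAR('b) ^ l)) ^ CHAR('b)"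
      by (simp add: power_mult[symmetric] mult.commute)
    also have "\<dots> = - ((y ^ (CHAR('b) ^ l)) ^ CHAR('b))"
      using Suc minus_power_prime_CHAR[OF refl assms] by simp
    finally show ?case by (simp add: power_mult[symmetric] mult.commute)
  qed simp
  show ?thesis using A[of x "-y"] B[of y] by simp
qed

definition ordge :: "nat \<Rightarrow> 'b::zero fps \<Rightarrow> bool" where
  "ordge u f \<longleftrightarrow> (\<forall>k<u. f $ k = 0)"

lemma ordge_mult:
  fixes f g :: "'b::comm_semiring_0 fps"
  assumes "ordge u f" "ordge v g" shows "ordge (u + v) (f * g)"
  unfolding ordge_def
proof (intro allI impI)
  fix k assume k: "k < u + v"
  have "(f*g)$k = (\<Sum>i=0..k. f$i * g$(k-i))" by (rule fps_mult_nth)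
  also have "\<dots> = 0"
  proof (rule sum.neutral, rule ballI)
    fix i assume ik: "i \<in> {0..k}"
    show "f$i * g$(k-i) = 0"
    proof (cases "i < u")
      case True thus ?thesis using assms(1) by (simp add: ordge_def)
    next
      case False
      hence "k - i < v" using k ik by auto
      thus ?thesis using assms(2) by (simp add: ordge_def)
    qed
  qed
  finally show "(f*g)$k = 0" .
qed

lemma ordge_0 [simp]: "ordge 0 f" by (simp add: ordge_def)

lemma ordge_mono: "ordge u f \<Longrightarrow> v \<le> u \<Longrightarrow> ordge v f"
  by (simp add: ordge_def)

lemma ordge_multL:
  fixes f g :: "'b::comm_semiring_0 fps"
  shows "ordge u f \<Longrightarrow> ordge u (g * f)"
  using ordge_mult[of 0 g u f] by simp

lemma ordge_multR:
  fixes f g :: "'b::comm_semiring_0 fps"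
  shows "ordge u f \<Longrightarrow> ordge u (f * g)"
  using ordge_mult[of u f 0 g] by simp

lemma ordge_add: "ordge u (f::'b::monoid_add fps) \<Longrightarrow> ordge u g \<Longrightarrow> ordge u (f + g)"
  by (simp add: ordge_def)

lemma ordge_diff: "ordge u (f::'b::group_add fps) \<Longrightarrow> ordge u g \<Longrightarrow> ordge u (f - g)"
  by (simp add: ordge_def)

lemma ordge_sum: "(\<And>i. i \<in> A \<Longrightarrow> ordge u (f i :: 'b::comm_monoid_add fps)) \<Longrightarrow> ordge u (sum f A)"
  by (simp add: ordge_def fps_sum_nth)

lemma ordge_power:
  fixes f :: "'b::comm_semiring_1 fps"
  shows "ordge u f \<Longrightarrow> ordge (n * u) (f ^ n)"
proof (induction n)
  case 0 thus ?case by simp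
next
  case (Suc n)
  thus ?case using ordge_mult[OF Suc.prems Suc.IH[OF Suc.prems]] by (simp add: add.commute)
qed

lemma ordge_const_cancel:
  fixes f :: "'b::field fps"
  shows "s \<noteq> 0 \<Longrightarrow> ordge u (fps_const s * f) \<Longrightarrow> ordge u f"
  by (simp add: ordge_def)

lemma ordge_phi: "(\<phi>::'b::comm_semiring_1 fps) $ 0 = 0 \<Longrightarrow> ordge 1 \<phi>"
  by (simp add: ordge_def)




definition wt :: "nat \<Rightarrow> 'b::zero fps fps \<Rightarrow> bool" where
  "wt w X \<longleftrightarrow> (\<forall>b a. b + 2*a < w \<longrightarrow> X$b$a = 0)"

lemma wt_mult:
  fixes X Y :: "'b::comm_semiring_0 fps fps"
  assumes "wt u X" "wt v Y" shows "wt (u + v) (X * Y)"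
  unfolding wt_def
proof (intro allI impI)
  fix b a assume ba: "b + 2*a < u + v"
  have "(X*Y)$b$a = (\<Sum>i=0..b. (X$i * Y$(b-i))$a)" by (simp add: fps_mult_nth fps_sum_nth)
  also have "\<dots> = (\<Sum>i=0..b. \<Sum>j=0..a. X$i$j * Y$(b-i)$(a-j))" by (simp add: fps_mult_nth)
  also have "\<dots> = 0"
  proof (intro sum.neutral ballI)
    fix i j assume i: "i \<in> {0..b}" and j: "j \<in> {0..a}"
    show "X$i$j * Y$(b-i)$(a-j) = 0"
    proof (cases "i + 2*j < u")
      case True thus ?thesis using assms(1) by (simp add: wt_def)
    next
      case False
      hence "(b-i) + 2*(a-j) < v" using ba i j by auto
      thus ?thesis using assms(2) by (simp add: wt_def)
    qed
  qed
  finally show "(X*Y)$b$a = 0" .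
qed

lemma wt_0 [simp]: "wt 0 X" by (simp add: wt_def)
lemma wt_mono: "wt u X \<Longrightarrow> v \<le> u \<Longrightarrow> wt v X" by (simp add: wt_def)
lemma wt_add: "wt u (X::'b::monoid_add fps fps) \<Longrightarrow> wt u Y \<Longrightarrow> wt u (X + Y)"
  by (simp add: wt_def)
lemma wt_diff: "wt u (X::'b::group_add fps fps) \<Longrightarrow> wt u Y \<Longrightarrow> wt u (X - Y)"
  by (simp add: wt_def)
lemma wt_uminus: "wt u (X::'b::group_add fps fps) \<Longrightarrow> wt u (- X)"
  by (simp add: wt_def)
lemma wt_sum: "(\<And>i. i \<in> A \<Longrightarrow> wt u (f i :: 'b::comm_monoid_add fps fps)) \<Longrightarrow> wt u (sum f A)"
  by (simp add: wt_def fps_sum_nth)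
lemma wt_power:
  fixes X :: "'b::comm_semiring_1 fps fps"
  shows "wt u X \<Longrightarrow> wt (n * u) (X ^ n)"
proof (induction n)
  case 0 thus ?case by simp
next
  case (Suc n)
  thus ?case using wt_mult[OF Suc.prems Suc.IH[OF Suc.prems]] by (simp add: add.commute)
qed
lemma wt_X_power: "wt n (fps_X ^ n :: 'b::comm_semiring_1 fps fps)"
  by (simp add: wt_def)
lemma wt_const: "ordge r f \<Longrightarrow> wt (2*r) (fps_const f)"
  by (simp add: wt_def ordge_def)
lemma wt_coeff: "wt w X \<Longrightarrow> b + 2*a < w \<Longrightarrow> X$b$a = 0"
  by (simp add: wt_def)

definition qsupp :: "nat \<Rightarrow> 'b::zero fps \<Rightarrow> bool" where
  "qsupp q A \<longleftrightarrow> (\<forall>n. \<not> q dvd n \<longrightarrow> A$n = 0)"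

lemma qsupp_mult:
  fixes A B :: "'b::comm_semiring_0 fps"
  assumes "qsupp q A" "qsupp q B" shows "qsupp q (A * B)"
  unfolding qsupp_def
proof (intro allI impI)
  fix n assume n: "\<not> q dvd n"
  have "(A*B)$n = (\<Sum>i=0..n. A$i * B$(n-i))" by (rule fps_mult_nth)
  also have "\<dots> = 0"
  proof (intro sum.neutral ballI)
    fix i assume i: "i \<in> {0..n}"
    show "A$i * B$(n-i) = 0"
    proof (cases "q dvd i")
      case False thus ?thesis using assms(1) by (simp add: qsupp_def)
    next
      case True
      hence "\<not> q dvd (n - i)" using n i by (metis atLeastAtMost_iff dvd_add le_add_diff_inverse)
      thus ?thesis using assms(2) by (simp add: qsupp_def)
    qed
  qed
  finally show "(A*B)$n = 0" .
qed

lemma qsupp_1: "qsupp q (1 :: 'b::{zero,one} fps)"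
  by (auto simp: qsupp_def)
lemma qsupp_add: "qsupp q (A::'b::monoid_add fps) \<Longrightarrow> qsupp q B \<Longrightarrow> qsupp q (A + B)"
  by (simp add: qsupp_def)
lemma qsupp_diff: "qsupp q (A::'b::group_add fps) \<Longrightarrow> qsupp q B \<Longrightarrow> qsupp q (A - B)"
  by (simp add: qsupp_def)
lemma qsupp_power:
  fixes A :: "'b::comm_semiring_1 fps"
  shows "qsupp q A \<Longrightarrow> qsupp q (A ^ n)"
  by (induction n) (auto intro: qsupp_mult simp: qsupp_1)
lemma qsupp_X_power: "qsupp q (fps_X ^ q :: 'b::comm_semiring_1 fps)"
  by (auto simp: qsupp_def)
lemma qsupp_const: "qsupp q (fps_const c :: 'b::comm_semiring_1 fps)"
  by (auto simp: qsupp_def)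




lemma coeff_binom_fps:
  "((fps_X + 1 :: 'b::comm_ring_1 fps) ^ n) $ k = of_nat (n choose k)"
proof -
  have "(fps_X + 1 :: 'b fps) ^ n = (\<Sum>j\<le>n. of_nat (n choose j) * fps_X^j * 1^(n-j))"
    by (rule binomial_ring)
  hence "((fps_X + 1 :: 'b fps) ^ n) $ k = (\<Sum>j\<le>n. (fps_const (of_nat (n choose j)) * fps_X^j) $ k)"
    by (simp add: fps_sum_nth fps_of_nat)
  also have "\<dots> = (\<Sum>j\<le>n. if k = j then of_nat (n choose j) else 0)"
    by (intro sum.cong) auto
  also have "\<dots> = of_nat (n choose k)" by (simp add: binomial_eq_0)
  finally show ?thesis .
qed

lemma choose_zero:
  assumes "prime (CHAR('b::comm_ring_1))" "0 < k" "k < CHAR('b) ^ l"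
  shows "(of_nat ((CHAR('b) ^ l * s) choose k) :: 'b) = 0"
proof -
  define q where "q = CHAR('b) ^ l"
  have "(fps_X + 1 :: 'b fps) ^ (q * s) = ((fps_X + 1 :: 'b fps) ^ q) ^ s"
    by (simp add: power_mult)
  also have "(fps_X + 1 :: 'b fps) ^ q = fps_X ^ q + 1"
    using frob_add[where 'b="'b fps", of fps_X 1 l] assms(1) by (simp add: q_def)
  finally have E: "(fps_X + 1 :: 'b fps) ^ (q * s) = (fps_X ^ q + 1) ^ s" .
  have "qsupp q ((fps_X ^ q + 1 :: 'b fps) ^ s)"
    by (intro qsupp_power qsupp_add qsupp_X_power qsupp_1)
  moreover have "\<not> q dvd k" using assms(2,3) by (auto simp: q_def dest: dvd_imp_le)
  ultimately have "((fps_X ^ q + 1 :: 'b fps) ^ s) $ k = 0" by (simp add: qsupp_def)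
  with E coeff_binom_fps[where 'b='b, of "q*s" k] show ?thesis by (simp add: q_def)
qed

lemma choose_split:
  assumes "prime (CHAR('b::comm_ring_1))" "CHAR('b) ^ l * s \<le> n"
  shows "(of_nat (n choose (CHAR('b) ^ l)) :: 'b) =
           of_nat ((CHAR('b) ^ l * s) choose (CHAR('b) ^ l)) + of_nat ((n - CHAR('b) ^ l * s) choose (CHAR('b) ^ l))"
proof -
  define q where "q = CHAR('b) ^ l"
  have q0: "q > 0" using assms(1) by (simp add: q_def prime_gt_0_nat)
  have "n choose q = (\<Sum>k\<le>q. ((q*s) choose k) * ((n - q*s) choose (q - k)))"
    using vandermonde[of "q*s" "n - q*s" q] assms(2) by (simp add: q_def)
  hence "(of_nat (n choose q) :: 'b) = (\<Sum>k\<le>q. of_nat ((q*s) choose k) * of_nat ((n - q*s) choose (q - k)))"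
    by simp
  also have "\<dots> = (\<Sum>k\<in>{0,q}. of_nat ((q*s) choose k) * of_nat ((n - q*s) choose (q - k)))"
  proof (rule sum.mono_neutral_right)
    show "\<forall>i\<in>{..q} - {0, q}. (of_nat ((q*s) choose i) :: 'b) * of_nat ((n - q*s) choose (q - i)) = 0"
      using choose_zero[OF assms(1)] by (auto simp: q_def)
  qed auto
  also have "\<dots> = of_nat ((n - q*s) choose q) + of_nat ((q*s) choose q)" using q0 by simp
  finally show ?thesis by (simp add: q_def)
qed




lemma hasse_nth: "(hasse_y i F) $ k = of_nat ((k + i) choose i) * F $ (k + i)"
  by (simp add: hasse_y_def)

lemma hasse_add: "hasse_y i (F + G) = hasse_y i F + hasse_y i G"
  by (simp add: fps_eq_iff hasse_nth algebra_simps)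
lemma hasse_diff: "hasse_y i (F - G) = hasse_y i F - hasse_y i G"
  by (simp add: fps_eq_iff hasse_nth algebra_simps)
lemma hasse_1: "i > 0 \<Longrightarrow> hasse_y i 1 = 0"
  by (simp add: fps_eq_iff hasse_nth)
lemma hasse_const: "i > 0 \<Longrightarrow> hasse_y i (fps_const c) = 0"
  by (simp add: fps_eq_iff hasse_nth)
lemma hasse_X_power: "hasse_y i (fps_X ^ i) = 1"
  by (simp add: fps_eq_iff hasse_nth)

lemma hasse_leibniz:
  fixes A B :: "'b::comm_ring_1 fps fps"
  assumes pr: "prime (CHAR('b))" and qd: "q = CHAR('b) ^ l" and A: "qsupp q A"
  shows "hasse_y q (A * B) = hasse_y q A * B + A * hasse_y q B"
proof (rule fps_ext)
  fix k
  define n where "n = k + q"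
  have q0: "q > 0" using pr by (simp add: qd prime_gt_0_nat)
  have pr': "prime (CHAR('b fps))" using pr by simp
  have L: "hasse_y q (A * B) $ k = (\<Sum>i=0..n. of_nat (n choose q) * (A$i * B$(n-i)))"
    by (simp add: hasse_nth fps_mult_nth n_def sum_distrib_left)
  have T1: "(hasse_y q A * B) $ k = (\<Sum>i=0..n. of_nat (i choose q) * A$i * B$(n-i))"
  proof -
    have "(hasse_y q A * B) $ k = (\<Sum>i=0..k. of_nat ((i + q) choose q) * A$(i+q) * B$(n-(i+q)))"
      by (simp add: hasse_nth fps_mult_nth n_def)
    also have "\<dots> = (\<Sum>i=0+q..k+q. of_nat (i choose q) * A$i * B$(n-i))"
      by (rule sum.shift_bounds_cl_nat_ivl[symmetric])
    also have "\<dots> = (\<Sum>i=0..n. of_nat (i choose q) * A$i * B$(n-i))"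
      by (rule sum.mono_neutral_left) (auto simp: n_def binomial_eq_0)
    finally show ?thesis .
  qed
  have T2: "(A * hasse_y q B) $ k = (\<Sum>i=0..n. A$i * (of_nat ((n-i) choose q) * B$(n-i)))"
  proof -
    have "(A * hasse_y q B) $ k = (\<Sum>i=0..k. A$i * (of_nat ((n-i) choose q) * B$(n-i)))"
      unfolding fps_mult_nth by (intro sum.cong) (auto simp: hasse_nth n_def)
    also have "\<dots> = (\<Sum>i=0..n. A$i * (of_nat ((n-i) choose q) * B$(n-i)))"
      by (rule sum.mono_neutral_left) (auto simp: n_def binomial_eq_0)
    finally show ?thesis .
  qed
  have "(hasse_y q A * B + A * hasse_y q B) $ k =
        (\<Sum>i=0..n. (of_nat (i choose q) + of_nat ((n-i) choose q)) * (A$i * B$(n-i)))"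
    unfolding fps_add_nth T1 T2 sum.distrib[symmetric] by (intro sum.cong refl) (simp add: algebra_simps)
  also have "\<dots> = (\<Sum>i=0..n. of_nat (n choose q) * (A$i * B$(n-i)))"
  proof (intro sum.cong refl)
    fix i assume i: "i \<in> {0..n}"
    show "(of_nat (i choose q) + of_nat ((n-i) choose q)) * (A$i * B$(n-i)) =
          of_nat (n choose q) * (A$i * B$(n-i))"
    proof (cases "q dvd i")
      case False thus ?thesis using A by (simp add: qsupp_def)
    next
      case True
      then obtain s where s: "i = q * s" by auto
      have "(of_nat (n choose CHAR('b fps) ^ l) :: 'b fps) =
           of_nat ((CHAR('b fps) ^ l * s) choose (CHAR('b fps) ^ l)) + of_nat ((n - CHAR('b fps) ^ l * s) choose (CHAR('b fps) ^ l))"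
        by (rule choose_split[OF pr']) (use i s qd in auto)
      thus ?thesis using s qd by simp
    qed
  qed
  finally show "hasse_y q (A * B) $ k = (hasse_y q A * B + A * hasse_y q B) $ k"
    using L by simp
qed




locale A4 =
  fixes P Q :: "'a::field fps fps" and \<phi> :: "'a fps" and p l e :: nat and \<alpha> :: 'a
  assumes char: "CHAR('a) = p" and p0: "p > 0"
    and PQ: "P = (fps_X - fps_const \<phi>) ^ (p ^ l * e) * Q"
    and e1: "e \<ge> 1" and cop: "coprime p e"
    and phi0: "\<phi> $ 0 = 0"
    and Q0: "Q $ 0 $ 0 = \<alpha>" and a0: "\<alpha> \<noteq> 0"
begin

definition "q = p ^ l"
definition "E = q * e"
definition "c = \<phi> ^ q"
definition "D = (fps_X ^ q - fps_const c :: 'a fps fps)"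
definition "aa = fps_const (fps_const \<alpha>) * fps_X ^ E"
definition "R = aa - P"
definition "H = hasse_y q P"

lemma pr: "prime p"
  using prime_CHAR_semidom[where 'a='a] char p0 by simp

lemma prC: "prime (CHAR('a))" using pr char by simp

lemma q0: "q > 0" using pr by (simp add: q_def prime_gt_0_nat)

lemma P_eq: "P = D ^ e * Q"
proof -
  have "(fps_X - fps_const \<phi> :: 'a fps fps) ^ q = fps_X ^ q - fps_const \<phi> ^ q"
    using frob[where 'b="'a fps fps", of fps_X "fps_const \<phi>" l] prC char by (simp add: q_def)
  hence "(fps_X - fps_const \<phi> :: 'a fps fps) ^ q = D"
    by (simp add: D_def c_def fps_const_power)
  thus ?thesis using PQ by (simp add: power_mult q_def)
qed

lemma e_nz: "(of_nat e :: 'a) \<noteq> 0"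
proof
  assume "(of_nat e :: 'a) = 0"
  hence "p dvd e" by (simp add: of_nat_eq_0_iff_char_dvd char)
  with cop have "is_unit p" using coprime_common_divisor dvd_refl by blast
  thus False using pr by (simp add: not_prime_unit)
qed

lemma qsupp_D: "qsupp q D"
  unfolding D_def by (intro qsupp_diff qsupp_X_power qsupp_const)

lemma hasse_D: "hasse_y q D = 1"
  using q0 by (simp add: D_def hasse_diff hasse_X_power hasse_const)

lemma leib: fixes A B :: "'a fps fps" assumes "qsupp q A" shows "hasse_y q (A * B) = hasse_y q A * B + A * hasse_y q B"
  by (rule hasse_leibniz[OF prC _ assms, where l=l]) (simp add: q_def char)

lemma hasse_Dpow: "hasse_y q (D ^ n) = of_nat n * D ^ (n - 1)"
proof (induction n)
  case 0 thus ?case using q0 by (simp add: hasse_1)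
next
  case (Suc n)
  have "hasse_y q (D ^ Suc n) = hasse_y q (D * D ^ n)" by simp
  also have "\<dots> = D ^ n + D * (of_nat n * D ^ (n - 1))"
    using leib[OF qsupp_D] Suc hasse_D by simp
  also have "\<dots> = of_nat (Suc n) * D ^ n"
    by (cases n) (simp_all add: algebra_simps)
  finally show ?case by simp
qed

lemma H_eq: "H = of_nat e * D ^ (e - 1) * Q + D ^ e * hasse_y q Q"
proof -
  have "H = hasse_y q (D ^ e * Q)" unfolding H_def using P_eq by simp
  also have "\<dots> = of_nat e * D ^ (e - 1) * Q + D ^ e * hasse_y q Q"
    unfolding leib[OF qsupp_power[OF qsupp_D]] hasse_Dpow by simp
  finally show ?thesis .
qed

lemma Q_unit: "\<exists>Qi. Q * Qi = 1"
proof -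
  have "Q $ 0 $ 0 \<noteq> 0" using Q0 a0 by simp
  hence "inverse (Q $ 0) * Q $ 0 = 1" by (rule inverse_mult_eq_1)
  moreover have "Q $ 0 * inverse (Q $ 0) = 1" using calculation by (simp add: mult.commute)
  ultimately show ?thesis using fps_right_inverse' by blast
qed

lemma c_ord: "ordge q c"
  using ordge_power[OF ordge_phi[OF phi0], of q] by (simp add: c_def)

lemma wt_D: "wt q D"
proof -
  have "wt (2*q) (fps_const c :: 'a fps fps)" by (rule wt_const[OF c_ord])
  hence "wt q (fps_const c :: 'a fps fps)" by (rule wt_mono) simp
  thus ?thesis unfolding D_def by (intro wt_diff wt_X_power)
qed

lemma wt_R: "wt (E + 1) R"
proof -
  have "D ^ e - (fps_X ^ q) ^ e = (D - fps_X ^ q) * (\<Sum>i<e. (fps_X ^ q) ^ (e - Suc i) * D ^ i)"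
    by (rule power_diff_sumr2)
  also have "D - fps_X ^ q = - fps_const c" by (simp add: D_def)
  finally have DE: "D ^ e - fps_X ^ E = - fps_const c * (\<Sum>i<e. (fps_X ^ q) ^ (e - Suc i) * D ^ i)"
    by (simp add: E_def power_mult)
  have "wt (2*q + q*(e-1)) (- fps_const c * (\<Sum>i<e. (fps_X ^ q) ^ (e - Suc i) * D ^ i))"
  proof (intro wt_mult wt_uminus wt_const c_ord wt_sum)
    fix i assume i: "i \<in> {..<e}"
    have "wt ((e - Suc i) * q + i * q) ((fps_X ^ q) ^ (e - Suc i) * D ^ i)"
      by (intro wt_mult wt_power wt_X_power wt_D)
    moreover have "e - Suc i + i = e - 1" using i by simp
    hence "(e - Suc i) * q + i * q = q * (e - 1)" by (metis add_mult_distrib mult.commute)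
    ultimately show "wt (q * (e - 1)) ((fps_X ^ q) ^ (e - Suc i) * D ^ i)" by simp
  qed
  hence W1: "wt (E + 1) (D ^ e - fps_X ^ E)"
    unfolding DE by (rule wt_mono) (use e1 q0 in \<open>auto simp: E_def algebra_simps diff_mult_distrib2\<close>)
  have W2: "wt 1 (fps_const (fps_const \<alpha>) - Q)"
    using Q0 by (auto simp: wt_def)
  have "R = (fps_const (fps_const \<alpha>) - Q) * fps_X ^ E - (D ^ e - fps_X ^ E) * Q"
    unfolding R_def aa_def using P_eq by (simp add: algebra_simps)
  moreover have "wt (E + 1) ((fps_const (fps_const \<alpha>) - Q) * fps_X ^ E)"
    using wt_mult[OF W2 wt_X_power[of E]] by simp
  moreover have "wt (E + 1) ((D ^ e - fps_X ^ E) * Q)"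
    using wt_mult[OF W1 wt_0[of Q]] by simp
  ultimately show ?thesis by (simp add: wt_diff)
qed

end




context A4
begin

lemma term_eq:
  "A4_term p l e \<alpha> P m = (if e * (m + 1) < 2 then 0 else
     fps_const (inverse (of_nat e * \<alpha> ^ (m + 1))) * (H * R ^ m) $ (q * (e * (m + 1) - 2)))"
  unfolding A4_term_def H_def R_def aa_def q_def E_def
  by (simp add: mult.assoc)

lemma tail:
  assumes m: "m > 2 * e * (d + q)" and k: "k \<le> d"
  shows "A4_term p l e \<alpha> P m $ k = 0"
proof -
  have "m \<ge> 1" using m by simp
  hence "1 * 2 \<le> e * (m + 1)" using e1 by (intro mult_le_mono) auto
  hence em: "\<not> e * (m + 1) < 2" by simp
  have W: "wt (0 + m * (E + 1)) (H * R ^ m)"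
    by (intro wt_mult wt_0 wt_power wt_R)
  define Nm where "Nm = q * (e * (m + 1) - 2)"
  have a1: "Nm \<le> E * m + E"
  proof -
    have "Nm \<le> q * (e * (m + 1))" by (simp add: Nm_def)
    also have "\<dots> = E * m + E" by (simp add: E_def algebra_simps)
    finally show ?thesis .
  qed
  have a2: "E \<le> 2 * (e * q)" by (simp add: E_def)
  have a3: "d \<le> e * d" using e1 by simp
  have a4: "2 * e * (d + q) = 2 * (e * d) + 2 * (e * q)" by (simp add: algebra_simps)
  have a5: "m * (E + 1) = E * m + m" by (simp add: algebra_simps)
  have "Nm + 2 * k < m * (E + 1)"
    unfolding a5 using a1 a2 a3 a4 m k by linarith
  hence "(H * R ^ m) $ Nm $ k = 0"
    using W by (simp add: wt_def)
  thus ?thesis using em by (simp add: term_eq Nm_def)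
qed

end



context A4
begin

lemma aa_pow: "aa ^ n = fps_const (fps_const (\<alpha> ^ n)) * fps_X ^ (E * n)"
  unfolding aa_def power_mult_distrib by (simp add: power_mult[symmetric])

lemma core:
  assumes M: "M \<ge> d * q + 2 * d + 1" and k: "k \<le> d"
  shows "(\<Sum>m\<le>M. A4_term p l e \<alpha> P m) $ k = c $ k"
proof -
  obtain Qi where Qi: "Q * Qi = 1" using Q_unit by blast
  define N where "N = q * (e * (M + 1) - 2)"
  define S where "S = (\<Sum>i<Suc M. aa ^ i * R ^ (M - i))"
  define T where "T = aa ^ Suc M - R ^ Suc M"
  define V where "V = D ^ (e - 1) * Q * S"
  define HQ where "HQ = hasse_y q Q"
  define Z where "Z = (\<Sum>m\<le>M. A4_term p l e \<alpha> P m)"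
  have M1: "M \<ge> 1" using M by simp
  have eM: "e * (M + 1) \<ge> 2"
  proof -
    have "1 * 2 \<le> e * (M + 1)" using e1 M1 by (intro mult_le_mono) auto
    thus ?thesis by simp
  qed
  have NqK: "N + q + q = E * Suc M"
  proof -
    have "N + q + q = q * (e * (M + 1) - 2 + 2)" by (simp add: N_def algebra_simps)
    also have "e * (M + 1) - 2 + 2 = e * (M + 1)" using eM by simp
    finally show ?thesis by (simp add: E_def algebra_simps)
  qed
  have PS: "P * S = T"
  proof -
    have "aa ^ Suc M - R ^ Suc M = (aa - R) * (\<Sum>i<Suc M. aa ^ i * R ^ (M - i))"
      by (rule diff_power_eq_sum)
    moreover have "aa - R = P" by (simp add: R_def)
    ultimately show ?thesis by (simp add: S_def T_def)
  qed
  have DV: "D * V = T"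
  proof -
    have "D * D ^ (e - 1) = D ^ e" using e1 by (metis Suc_diff_1 less_le_trans zero_less_one power_Suc)
    hence "D * V = D ^ e * Q * S" by (simp add: V_def mult.assoc)
    thus ?thesis using PS P_eq by simp
  qed
  have HS: "H * S = fps_const (of_nat e) * V + HQ * Qi * T"
  proof -
    have "HQ * Qi * T = (Q * Qi) * (D ^ e * HQ * S)" unfolding PS[symmetric] P_eq by (simp add: ac_simps)
    hence "HQ * Qi * T = D ^ e * HQ * S" using Qi by simp
    moreover have "H * S = of_nat e * V + D ^ e * HQ * S"
      by (simp add: H_eq V_def HQ_def algebra_simps)
    ultimately show ?thesis by (simp only: fps_of_nat)
  qed
  have E1: "fps_const (of_nat e * \<alpha> ^ Suc M) * Z = (H * S) $ N"
  proof -
    have "Z = (\<Sum>m<Suc M. A4_term p l e \<alpha> P m)" by (simp add: Z_def lessThan_Suc_atMost)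
    also have "\<dots> = (\<Sum>i<Suc M. A4_term p l e \<alpha> P (M - i))"
      using sum.nat_diff_reindex[of "\<lambda>m. A4_term p l e \<alpha> P m" "Suc M"] by simp
    finally have Zs: "Z = (\<Sum>i<Suc M. A4_term p l e \<alpha> P (M - i))" .
    have "(H * S) $ N = (\<Sum>i<Suc M. (H * (aa ^ i * R ^ (M - i))) $ N)"
      unfolding S_def sum_distrib_left fps_sum_nth by (rule refl)
    also have "\<dots> = (\<Sum>i<Suc M. fps_const (of_nat e * \<alpha> ^ Suc M) * A4_term p l e \<alpha> P (M - i))"
    proof (intro sum.cong refl)
      fix i assume i: "i \<in> {..<Suc M}"
      define m where "m = M - i"
      have Mmi: "M = m + i" using i by (simp add: m_def)
      have X: "(H * (aa ^ i * R ^ (M - i))) $ N =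
            fps_const (\<alpha> ^ i) * (if N < E * i then 0 else (H * R ^ m) $ (N - E * i))"
      proof -
        have "H * (aa ^ i * R ^ (M - i)) = fps_const (fps_const (\<alpha> ^ i)) * (fps_X ^ (E * i) * (H * R ^ m))"
          by (simp add: aa_pow m_def ac_simps)
        hence "(H * (aa ^ i * R ^ (M - i))) $ N = fps_const (\<alpha> ^ i) * (fps_X ^ (E * i) * (H * R ^ m)) $ N"
          by (simp only: fps_mult_left_const_nth)
        thus ?thesis by (simp only: fps_X_power_mult_nth)
      qed
      show "(H * (aa ^ i * R ^ (M - i))) $ N = fps_const (of_nat e * \<alpha> ^ Suc M) * A4_term p l e \<alpha> P (M - i)"
      proof (cases "e * (m + 1) < 2")
        case True
        have m0: "m = 0"
        proof (rule ccontr)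
          assume "m \<noteq> 0"
          hence "1 * 2 \<le> e * (m + 1)" using e1 by (intro mult_le_mono) auto
          thus False using True by simp
        qed
        have e1': "e = 1" using True m0 e1 by simp
        have iM: "i = M" using Mmi m0 by simp
        have "E * i = q * i" unfolding E_def by (simp add: e1')
        moreover have "N = q * (i - 1)" by (simp add: N_def e1' iM)
        moreover have "q * (i - 1) < q * i" using q0 M1 iM by simp
        ultimately have "N < E * i" by simp
        thus ?thesis using X True by (simp add: term_eq m_def[symmetric])
      next
        case False
        have eq1: "e * (M + 1) - 2 = (e * (m + 1) - 2) + e * i" using False Mmi by (simp add: algebra_simps)
        have Neq: "N = q * (e * (m + 1) - 2) + E * i"
          unfolding N_def eq1 by (simp add: E_def algebra_simps)
        have sc: "fps_const (of_nat e * \<alpha> ^ Suc M) * fps_const (inverse (of_nat e * \<alpha> ^ (m + 1))) = fps_const (\<alpha> ^ i)"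
          using e_nz a0 Mmi by (simp add: power_add field_simps)
        have "(H * (aa ^ i * R ^ (M - i))) $ N = fps_const (\<alpha> ^ i) * (H * R ^ m) $ (q * (e * (m + 1) - 2))"
          using X Neq by simp
        also have "\<dots> = fps_const (of_nat e * \<alpha> ^ Suc M) * (fps_const (inverse (of_nat e * \<alpha> ^ (m + 1))) * (H * R ^ m) $ (q * (e * (m + 1) - 2)))"
          using sc by (simp add: mult.assoc[symmetric])
        finally show ?thesis using False by (simp add: term_eq m_def[symmetric])
      qed
    qed
    also have "\<dots> = fps_const (of_nat e * \<alpha> ^ Suc M) * Z" unfolding Zs sum_distrib_left by (rule refl)
    finally show ?thesis by simp
  qed
  have NK: "N < E * Suc M" using NqK q0 by linarith
  have E2: "(H * S) $ N = fps_const (of_nat e) * V $ N - (HQ * Qi * R ^ Suc M) $ N"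
  proof -
    have "(HQ * Qi * aa ^ Suc M) = fps_const (fps_const (\<alpha> ^ Suc M)) * (HQ * Qi * fps_X ^ (E * Suc M))"
      unfolding aa_pow by (simp only: mult.assoc mult.left_commute)
    hence "(HQ * Qi * aa ^ Suc M) $ N = fps_const (\<alpha> ^ Suc M) * (HQ * Qi * fps_X ^ (E * Suc M)) $ N"
      by (simp only: fps_mult_left_const_nth)
    also have "(HQ * Qi * fps_X ^ (E * Suc M)) $ N = 0"
      by (simp only: fps_X_power_mult_right_nth if_P[OF NK])
    finally have "(HQ * Qi * aa ^ Suc M) $ N = 0" by simp
    thus ?thesis unfolding HS T_def right_diff_distrib fps_add_nth fps_sub_nth fps_mult_left_const_nth by (simp add: fps_of_nat)
  qed
  have O1: "ordge (d + 1) ((HQ * Qi * R ^ Suc M) $ N)"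
  proof -
    have W: "wt (0 + Suc M * (E + 1)) (HQ * Qi * R ^ Suc M)"
      by (intro wt_mult wt_0 wt_power wt_R)
    have "N + 2 * j < Suc M * (E + 1)" if "j < d + 1" for j
    proof -
      have "Suc M * (E + 1) = E * Suc M + Suc M" by (simp add: algebra_simps)
      thus ?thesis using NK that M by linarith
    qed
    thus ?thesis using W by (simp add: ordge_def wt_def)
  qed
  have Vrec: "V $ j = T $ (j + q) + c * V $ (j + q)" for j
  proof -
    have "T $ (j + q) = (fps_X ^ q * V) $ (j + q) - (fps_const c * V) $ (j + q)"
      by (simp add: DV[symmetric] D_def algebra_simps)
    thus ?thesis by (simp add: fps_X_power_mult_nth)
  qed
  have Viter: "V $ N = (\<Sum>j<i. c ^ j * T $ (N + q + j * q)) + c ^ i * V $ (N + i * q)" for i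
  proof (induction i)
    case 0 thus ?case by simp
  next
    case (Suc i)
    have "V $ (N + i * q) = T $ (N + q + i * q) + c * V $ (N + Suc i * q)"
      using Vrec[of "N + i * q"] by (simp add: algebra_simps)
    thus ?case using Suc by (simp add: algebra_simps)
  qed
  have Tn: "T $ n = (if n = E * Suc M then fps_const (\<alpha> ^ Suc M) else 0) - (R ^ Suc M) $ n" for n
    unfolding T_def aa_pow by simp
  have Sum2: "(\<Sum>j<d+2. c ^ j * T $ (N + q + j * q)) =
      c * fps_const (\<alpha> ^ Suc M) - (\<Sum>j<d+2. c ^ j * (R ^ Suc M) $ (N + q + j * q))"
  proof -
    have iff: "N + q + j * q = E * Suc M \<longleftrightarrow> j = 1" for j
    proof -
      have "N + q + j * q = E * Suc M \<longleftrightarrow> N + q + j * q = N + q + 1 * q" by (simp only: NqK mult_1)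
      also have "\<dots> \<longleftrightarrow> j * q = 1 * q" by (rule add_left_cancel)
      also have "\<dots> \<longleftrightarrow> j = 1" using q0 by simp
      finally show ?thesis .
    qed
    have "(\<Sum>j<d+2. c ^ j * T $ (N + q + j * q)) =
        (\<Sum>j<d+2. (if j = 1 then c ^ j * fps_const (\<alpha> ^ Suc M) else 0)) - (\<Sum>j<d+2. c ^ j * (R ^ Suc M) $ (N + q + j * q))"
    proof -
      have "(\<Sum>j<d+2. c ^ j * T $ (N + q + j * q)) =
          (\<Sum>j<d+2. (if j = 1 then c ^ j * fps_const (\<alpha> ^ Suc M) else 0) - c ^ j * (R ^ Suc M) $ (N + q + j * q))"
      proof (intro sum.cong refl)
        fix j
        have "T $ (N + q + j * q) = (if j = 1 then fps_const (\<alpha> ^ Suc M) else 0) - (R ^ Suc M) $ (N + q + j * q)"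
          by (simp only: Tn iff)
        thus "c ^ j * T $ (N + q + j * q) = (if j = 1 then c ^ j * fps_const (\<alpha> ^ Suc M) else 0) - c ^ j * (R ^ Suc M) $ (N + q + j * q)"
          by (cases "j = 1") (simp_all add: right_diff_distrib)
      qed
      thus ?thesis by (simp only: sum_subtractf)
    qed
    also have "(\<Sum>j<d+2. (if j = 1 then c ^ j * fps_const (\<alpha> ^ Suc M) else 0)) = c * fps_const (\<alpha> ^ Suc M)"
      by (simp add: sum.delta)
    finally show ?thesis .
  qed
  have O2: "ordge (d + 1) (\<Sum>j<d+2. c ^ j * (R ^ Suc M) $ (N + q + j * q))"
  proof (intro ordge_sum ordge_multL)
    fix j assume j: "j \<in> {..<d+2}"
    have W: "wt (Suc M * (E + 1)) (R ^ Suc M)" by (intro wt_power wt_R)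
    have "N + q + j * q + 2 * t < Suc M * (E + 1)" if "t < d + 1" for t
    proof -
      have "j * q \<le> (d + 1) * q" using j by (intro mult_le_mono) auto
      moreover have "(d + 1) * q = d * q + q" by simp
      moreover have "Suc M * (E + 1) = E * Suc M + Suc M" by (simp add: algebra_simps)
      ultimately show ?thesis using NqK that M by linarith
    qed
    thus "ordge (d + 1) ((R ^ Suc M) $ (N + q + j * q))" using W by (simp add: ordge_def wt_def)
  qed
  have O3: "ordge (d + 1) (c ^ (d + 2) * V $ (N + (d + 2) * q))"
  proof (intro ordge_multR)
    have "ordge ((d + 2) * q) (c ^ (d + 2))" by (rule ordge_power[OF c_ord])
    moreover have "(d + 2) * 1 \<le> (d + 2) * q" using q0 by (intro mult_le_mono) auto
    hence "d + 1 \<le> (d + 2) * q" by simp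
    ultimately show "ordge (d + 1) (c ^ (d + 2))" by (rule ordge_mono)
  qed
  have key: "fps_const (of_nat e * \<alpha> ^ Suc M) * (Z - c) =
      fps_const (of_nat e) * (c ^ (d + 2) * V $ (N + (d + 2) * q) - (\<Sum>j<d+2. c ^ j * (R ^ Suc M) $ (N + q + j * q)))
      - (HQ * Qi * R ^ Suc M) $ N"
  proof -
    have fc: "fps_const (of_nat e * \<alpha> ^ Suc M) = fps_const (of_nat e) * fps_const (\<alpha> ^ Suc M)" by simp
    have "fps_const (of_nat e * \<alpha> ^ Suc M) * (Z - c) = (H * S) $ N - fps_const (of_nat e) * (c * fps_const (\<alpha> ^ Suc M))"
      unfolding right_diff_distrib E1 unfolding fc by (simp only: mult.commute mult.left_commute)
    also have "\<dots> = fps_const (of_nat e) * (V $ N - c * fps_const (\<alpha> ^ Suc M)) - (HQ * Qi * R ^ Suc M) $ N"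
      unfolding E2 right_diff_distrib by (simp only: diff_diff_eq add.commute)
    also have "V $ N - c * fps_const (\<alpha> ^ Suc M) = c ^ (d + 2) * V $ (N + (d + 2) * q) - (\<Sum>j<d+2. c ^ j * (R ^ Suc M) $ (N + q + j * q))"
      unfolding Viter[of "d+2"] Sum2 by (simp add: algebra_simps)
    finally show ?thesis .
  qed
  have "ordge (d + 1) (fps_const (of_nat e * \<alpha> ^ Suc M) * (Z - c))"
    unfolding key by (intro ordge_diff ordge_multL O1 O2 O3)
  hence "ordge (d + 1) (Z - c)"
    by (rule ordge_const_cancel[rotated]) (use e_nz a0 in simp)
  thus ?thesis using k by (simp add: ordge_def Z_def)
qed

end


theorem corollaryA4:
  fixes P Q :: "'a::field fps fps" and \<phi> :: "'a fps" and p l e :: nat and \<alpha> :: 'a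
  assumes "CHAR('a) = p" and "p > 0"
    and "P = (fps_X - fps_const \<phi>) ^ (p ^ l * e) * Q"
    and "e \<ge> 1" and "coprime p e"
    and "fps_nth \<phi> 0 = 0"
    and "fps_nth (fps_nth Q 0) 0 = \<alpha>" and "\<alpha> \<noteq> 0"
  shows "(\<lambda>m. A4_term p l e \<alpha> P m) sums (\<phi> ^ (p ^ l))
         \<and> (\<forall>d. hom_le d (\<phi> ^ (p ^ l)) =
               hom_le d (\<Sum>m\<le>2 * e * (d + p ^ l). A4_term p l e \<alpha> P m))"
proof -
  interpret A4 P Q \<phi> p l e \<alpha> using assms by unfold_locales
  have S: "(\<lambda>m. A4_term p l e \<alpha> P m) sums (\<phi> ^ (p ^ l))"
    unfolding sums_def
  proof (rule tendsto_fpsI)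
    fix n
    show "\<forall>\<^sub>F N in sequentially. (\<Sum>m<N. A4_term p l e \<alpha> P m) $ n = (\<phi> ^ p ^ l) $ n"
      unfolding eventually_sequentially
    proof (intro exI allI impI)
      fix N assume N: "Suc (n * q + 2 * n + 1) \<le> N"
      then obtain M where NM: "N = Suc M" and M: "n * q + 2 * n + 1 \<le> M"
        by (cases N) auto
      have "(\<Sum>m<N. A4_term p l e \<alpha> P m) = (\<Sum>m\<le>M. A4_term p l e \<alpha> P m)"
        by (simp add: NM lessThan_Suc_atMost)
      thus "(\<Sum>m<N. A4_term p l e \<alpha> P m) $ n = (\<phi> ^ p ^ l) $ n"
        using core[OF M order_refl] by (simp add: c_def q_def)
    qed
  qed
  have Hm: "hom_le d (\<phi> ^ (p ^ l)) = hom_le d (\<Sum>m\<le>2 * e * (d + p ^ l). A4_term p l e \<alpha> P m)" for d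
  proof (rule fps_ext)
    fix k
    define K where "K = 2 * e * (d + q)"
    define M where "M = d * q + 2 * d + 1 + K"
    show "hom_le d (\<phi> ^ (p ^ l)) $ k = hom_le d (\<Sum>m\<le>2 * e * (d + p ^ l). A4_term p l e \<alpha> P m) $ k"
    proof (cases "k \<le> d")
      case True
      have "(\<Sum>m\<le>K. A4_term p l e \<alpha> P m) $ k = (\<Sum>m\<le>K. A4_term p l e \<alpha> P m $ k)"
        by (simp add: fps_sum_nth)
      also have "\<dots> = (\<Sum>m\<le>M. A4_term p l e \<alpha> P m $ k)"
      proof (rule sum.mono_neutral_left)
        show "\<forall>i\<in>{..M} - {..K}. A4_term p l e \<alpha> P i $ k = 0"
        proof
          fix i assume "i \<in> {..M} - {..K}"
          hence "i > 2 * e * (d + q)" by (simp add: K_def)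
          thus "A4_term p l e \<alpha> P i $ k = 0" by (rule tail[OF _ True])
        qed
      qed (auto simp: M_def)
      also have "\<dots> = (\<Sum>m\<le>M. A4_term p l e \<alpha> P m) $ k"
        by (simp add: fps_sum_nth)
      also have "\<dots> = c $ k" by (rule core[OF _ True]) (simp add: M_def)
      finally show ?thesis using True by (simp add: hom_le_def K_def c_def q_def)
    qed (simp add: hom_le_def)
  qed
  show ?thesis using S Hm by blast
qed

end
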